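(* Let $\mathcal{D}$ be a category. For every pseudo-functorial factorization in $\mathcal{D}$ there exists a functorial factorization in $\mathcal{D}$ naturally isomorphic to it (as functors $\mathcal{D}^{\Delta^1}\to\mathcal{D}^{\Delta^2}$).
   Context: $\Delta^n$ is the linear poset $\{0,\dots,n\}$ viewed as a category with a unique morphism $i\to j$ for $i\le j$. The composition functor $\circ:\mathcal{D}^{\Delta^2}\to\mathcal{D}^{\Delta^1}$ is restriction along $\Delta^1\cong\Delta^{\{0,2\}}\hookrightarrow\Delta^2$. A functorial factorization in $\mathcal{D}$ is a functor $s:\mathcal{D}^{\Delta^1}\to\mathcal{D}^{\Delta^2}$ with $\circ\, s=\mathrm{id}$ (a strict section). A pseudo-functorial factorization is a functor $s:\mathcal{D}^{\Delta^1}\to\mathcal{D}^{\Delta^2}$ together with a natural isomorphism $\circ\, s\cong\mathrm{id}_{\mathcal{D}^{\Delta^1}}$. *)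

theory Defs
  imports Main
begin

record ('o, 'm) category =
  Ob   :: "'o set"
  Ar   :: "'m set"
  Dom  :: "'m \<Rightarrow> 'o"
  Cod  :: "'m \<Rightarrow> 'o"
  Id   :: "'o \<Rightarrow> 'm"
  Comp :: "'m \<Rightarrow> 'm \<Rightarrow> 'm"   (* Comp C g f = g \<circ> f *)

definition hom :: "('o, 'm) category \<Rightarrow> 'o \<Rightarrow> 'o \<Rightarrow> 'm set" where
  "hom C a b = {f \<in> Ar C. Dom C f = a \<and> Cod C f = b}"

definition category :: "('o, 'm) category \<Rightarrow> bool" where
  "category C \<longleftrightarrow>
     (\<forall>f\<in>Ar C. Dom C f \<in> Ob C \<and> Cod C f \<in> Ob C) \<and>
     (\<forall>a\<in>Ob C. Id C a \<in> hom C a a) \<and>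
     (\<forall>f\<in>Ar C. \<forall>g\<in>Ar C. Cod C f = Dom C g \<longrightarrow>
         Comp C g f \<in> hom C (Dom C f) (Cod C g)) \<and>
     (\<forall>f\<in>Ar C. Comp C (Id C (Cod C f)) f = f \<and> Comp C f (Id C (Dom C f)) = f) \<and>
     (\<forall>f\<in>Ar C. \<forall>g\<in>Ar C. \<forall>h\<in>Ar C. Cod C f = Dom C g \<longrightarrow> Cod C g = Dom C h \<longrightarrow>
         Comp C h (Comp C g f) = Comp C (Comp C h g) f)"

definition is_iso :: "('o, 'm) category \<Rightarrow> 'm \<Rightarrow> bool" where
  "is_iso C f \<longleftrightarrow> f \<in> Ar C \<and>
     (\<exists>g \<in> hom C (Cod C f) (Dom C f).
        Comp C g f = Id C (Dom C f) \<and> Comp C f g = Id C (Cod C f))"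

definition is_functor ::
  "('a, 'b) category \<Rightarrow> ('c, 'd) category \<Rightarrow> ('a \<Rightarrow> 'c) \<Rightarrow> ('b \<Rightarrow> 'd) \<Rightarrow> bool" where
  "is_functor C D Fo Fa \<longleftrightarrow>
     (\<forall>a\<in>Ob C. Fo a \<in> Ob D) \<and>
     (\<forall>f\<in>Ar C. Fa f \<in> hom D (Fo (Dom C f)) (Fo (Cod C f))) \<and>
     (\<forall>a\<in>Ob C. Fa (Id C a) = Id D (Fo a)) \<and>
     (\<forall>f\<in>Ar C. \<forall>g\<in>Ar C. Cod C f = Dom C g \<longrightarrow> Fa (Comp C g f) = Comp D (Fa g) (Fa f))"

definition nat_iso ::
  "('a, 'b) category \<Rightarrow> ('c, 'd) category \<Rightarrow> ('a \<Rightarrow> 'c) \<Rightarrow> ('b \<Rightarrow> 'd)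
     \<Rightarrow> ('a \<Rightarrow> 'c) \<Rightarrow> ('b \<Rightarrow> 'd) \<Rightarrow> ('a \<Rightarrow> 'd) \<Rightarrow> bool" where
  "nat_iso C D Fo Fa Go Ga eta \<longleftrightarrow>
     is_functor C D Fo Fa \<and> is_functor C D Go Ga \<and>
     (\<forall>a\<in>Ob C. eta a \<in> hom D (Fo a) (Go a) \<and> is_iso D (eta a)) \<and>
     (\<forall>f\<in>Ar C. Comp D (eta (Cod C f)) (Fa f) = Comp D (Ga f) (eta (Dom C f)))"

text \<open>A functor Delta^n -> D is given by the images F i j of the unique arrows i -> j
  (i \<le> j \<le> n); F i j = undefined outside this range (extensionality).\<close>

definition vtx :: "('o, 'm) category \<Rightarrow> (nat \<Rightarrow> nat \<Rightarrow> 'm) \<Rightarrow> nat \<Rightarrow> 'o" where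
  "vtx D F i = Dom D (F i i)"

definition diagram :: "('o, 'm) category \<Rightarrow> nat \<Rightarrow> (nat \<Rightarrow> nat \<Rightarrow> 'm) \<Rightarrow> bool" where
  "diagram D n F \<longleftrightarrow>
     (\<forall>i j. i \<le> j \<and> j \<le> n \<longrightarrow> F i j \<in> hom D (vtx D F i) (vtx D F j)) \<and>
     (\<forall>i j. \<not> (i \<le> j \<and> j \<le> n) \<longrightarrow> F i j = undefined) \<and>
     (\<forall>i. i \<le> n \<longrightarrow> vtx D F i \<in> Ob D \<and> F i i = Id D (vtx D F i)) \<and>
     (\<forall>i j k. i \<le> j \<and> j \<le> k \<and> k \<le> n \<longrightarrow> F i k = Comp D (F j k) (F i j))"

type_synonym 'm diag = "nat \<Rightarrow> nat \<Rightarrow> 'm"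
type_synonym 'm diag_arr = "'m diag \<times> 'm diag \<times> (nat \<Rightarrow> 'm)"

definition diag_arr :: "('o, 'm) category \<Rightarrow> nat \<Rightarrow> 'm diag_arr \<Rightarrow> bool" where
  "diag_arr D n x \<longleftrightarrow> (case x of (F, G, \<alpha>) \<Rightarrow>
     diagram D n F \<and> diagram D n G \<and>
     (\<forall>i. i \<le> n \<longrightarrow> \<alpha> i \<in> hom D (vtx D F i) (vtx D G i)) \<and>
     (\<forall>i. n < i \<longrightarrow> \<alpha> i = undefined) \<and>
     (\<forall>i j. i \<le> j \<and> j \<le> n \<longrightarrow> Comp D (\<alpha> j) (F i j) = Comp D (G i j) (\<alpha> i)))"

definition fun_cat :: "('o, 'm) category \<Rightarrow> nat \<Rightarrow> ('m diag, 'm diag_arr) category" where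
  "fun_cat D n = \<lparr>
     Ob = {F. diagram D n F},
     Ar = {x. diag_arr D n x},
     Dom = (\<lambda>(F, G, \<alpha>). F),
     Cod = (\<lambda>(F, G, \<alpha>). G),
     Id = (\<lambda>F. (F, F, \<lambda>i. if i \<le> n then Id D (vtx D F i) else undefined)),
     Comp = (\<lambda>(G, H, \<beta>) (F, G', \<alpha>).
               (F, H, \<lambda>i. if i \<le> n then Comp D (\<beta> i) (\<alpha> i) else undefined)) \<rparr>"

text \<open>Restriction along Delta^1 = Delta^{0,2} \<subseteq> Delta^2 (0 |-> 0, 1 |-> 2).\<close>
definition restr_ob :: "'m diag \<Rightarrow> 'm diag" where
  "restr_ob F = (\<lambda>i j. if i \<le> j \<and> j \<le> 1 then F (2 * i) (2 * j) else undefined)"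

definition restr_ar :: "'m diag_arr \<Rightarrow> 'm diag_arr" where
  "restr_ar x = (case x of (F, G, \<alpha>) \<Rightarrow>
     (restr_ob F, restr_ob G, \<lambda>i. if i \<le> 1 then \<alpha> (2 * i) else undefined))"

definition functorial_factorization ::
  "('o, 'm) category \<Rightarrow> ('m diag \<Rightarrow> 'm diag) \<Rightarrow> ('m diag_arr \<Rightarrow> 'm diag_arr) \<Rightarrow> bool" where
  "functorial_factorization D so sa \<longleftrightarrow>
     is_functor (fun_cat D 1) (fun_cat D 2) so sa \<and>
     (\<forall>X \<in> Ob (fun_cat D 1). restr_ob (so X) = X) \<and>
     (\<forall>f \<in> Ar (fun_cat D 1). restr_ar (sa f) = f)"

definition pseudo_functorial_factorization ::
  "('o, 'm) category \<Rightarrow> ('m diag \<Rightarrow> 'm diag) \<Rightarrow> ('m diag_arr \<Rightarrow> 'm diag_arr) \<Rightarrow> bool" where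
  "pseudo_functorial_factorization D so sa \<longleftrightarrow>
     is_functor (fun_cat D 1) (fun_cat D 2) so sa \<and>
     (\<exists>\<theta>. nat_iso (fun_cat D 1) (fun_cat D 1)
              (restr_ob \<circ> so) (restr_ar \<circ> sa) (\<lambda>X. X) (\<lambda>f. f) \<theta>)"

end

theory Submission
  imports Defs
begin

locale cat = fixes D :: "('o,'m) category" assumes cat: "category D"
begin

lemma hom_D: "f \<in> hom D a b \<Longrightarrow> f \<in> Ar D \<and> Dom D f = a \<and> Cod D f = b"
  by (simp add: hom_def)

lemma hom_ob: "f \<in> hom D a b \<Longrightarrow> a \<in> Ob D \<and> b \<in> Ob D"
  using cat unfolding category_def hom_def by auto

lemma comp_hom: "f \<in> hom D a b \<Longrightarrow> g \<in> hom D b c \<Longrightarrow> Comp D g f \<in> hom D a c"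
  using cat unfolding category_def hom_def by auto

lemma id_hom: "a \<in> Ob D \<Longrightarrow> Id D a \<in> hom D a a"
  using cat unfolding category_def by auto

lemma idl: "f \<in> hom D a b \<Longrightarrow> Comp D (Id D b) f = f"
  using cat unfolding category_def hom_def by auto

lemma idr: "f \<in> hom D a b \<Longrightarrow> Comp D f (Id D a) = f"
  using cat unfolding category_def hom_def by auto

lemma assoc: "f \<in> hom D a b \<Longrightarrow> g \<in> hom D b c \<Longrightarrow> h \<in> hom D c d \<Longrightarrow>
   Comp D h (Comp D g f) = Comp D (Comp D h g) f"
  using cat unfolding category_def hom_def by auto

end

definition inv_ar :: "('o,'m) category \<Rightarrow> 'm \<Rightarrow> 'm" where
  "inv_ar D f = (SOME g. g \<in> hom D (Cod D f) (Dom D f) \<and> Comp D g f = Id D (Dom D f) \<and> Comp D f g = Id D (Cod D f))"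

context cat begin

lemma inv_ar:
  assumes "is_iso D f" "f \<in> hom D a b"
  shows "inv_ar D f \<in> hom D b a" "Comp D (inv_ar D f) f = Id D a" "Comp D f (inv_ar D f) = Id D b"
proof -
  have "\<exists>g. g \<in> hom D (Cod D f) (Dom D f) \<and> Comp D g f = Id D (Dom D f) \<and> Comp D f g = Id D (Cod D f)"
    using assms(1) unfolding is_iso_def by blast
  from someI_ex[OF this] assms(2) show "inv_ar D f \<in> hom D b a" "Comp D (inv_ar D f) f = Id D a" "Comp D f (inv_ar D f) = Id D b"
    unfolding inv_ar_def hom_def by auto
qed

lemma inv_is_iso:
  assumes "is_iso D f" "f \<in> hom D a b"
  shows "is_iso D (inv_ar D f)"
  using inv_ar[OF assms] assms(2) unfolding is_iso_def hom_def by (auto intro!: bexI[where x=f])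

lemma swap:
  assumes f: "f \<in> hom D a b" "is_iso D f" and g: "g \<in> hom D c d" "is_iso D g"
    and h: "h \<in> hom D a c" and k: "k \<in> hom D b d" and e: "Comp D k f = Comp D g h"
  shows "Comp D (inv_ar D g) k = Comp D h (inv_ar D f)"
proof -
  note fi = inv_ar[OF f(2,1)] and gi = inv_ar[OF g(2,1)]
  have "Comp D (inv_ar D g) k = Comp D (inv_ar D g) (Comp D k (Comp D f (inv_ar D f)))"
    using fi idr[OF k] by simp
  also have "\<dots> = Comp D (inv_ar D g) (Comp D (Comp D k f) (inv_ar D f))"
    using assoc[OF fi(1) f(1) k] by simp
  also have "\<dots> = Comp D (inv_ar D g) (Comp D (Comp D g h) (inv_ar D f))" using e by simp
  also have "\<dots> = Comp D (inv_ar D g) (Comp D g (Comp D h (inv_ar D f)))"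
    using assoc[OF fi(1) h g(1)] by simp
  also have "\<dots> = Comp D (Comp D (inv_ar D g) g) (Comp D h (inv_ar D f))"
    using assoc[OF comp_hom[OF fi(1) h] g(1) gi(1)] by simp
  also have "\<dots> = Comp D h (inv_ar D f)" using gi idl[OF comp_hom[OF fi(1) h]] by simp
  finally show ?thesis .
qed

end

lemma fc_simps [simp]:
  "Ob (fun_cat D n) = {F. diagram D n F}"
  "Ar (fun_cat D n) = {x. diag_arr D n x}"
  "Dom (fun_cat D n) (F, G, \<alpha>) = F"
  "Cod (fun_cat D n) (F, G, \<alpha>) = G"
  "Id (fun_cat D n) F = (F, F, \<lambda>i. if i \<le> n then Id D (vtx D F i) else undefined)"
  "Comp (fun_cat D n) (G, H, \<beta>) (F, G', \<alpha>) = (F, H, \<lambda>i. if i \<le> n then Comp D (\<beta> i) (\<alpha> i) else undefined)"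
  by (simp_all add: fun_cat_def)

lemma hom_fc: "x \<in> hom (fun_cat D n) F G \<longleftrightarrow> (\<exists>\<alpha>. x = (F, G, \<alpha>) \<and> diag_arr D n (F, G, \<alpha>))"
  by (cases x) (auto simp: hom_def)

lemma vtx_restr [simp]: "vtx D (restr_ob F) 0 = vtx D F 0" "vtx D (restr_ob F) 1 = vtx D F 2" "vtx D (restr_ob F) (Suc 0) = vtx D F 2"
  by (simp_all add: vtx_def restr_ob_def)

lemma iso_fc_comp:
  assumes "is_iso (fun_cat D n) (F, G, \<alpha>)" "i \<le> n"
  shows "is_iso D (\<alpha> i)"
proof -
  from assms(1) obtain g where g: "g \<in> hom (fun_cat D n) G F"
    and e1: "Comp (fun_cat D n) g (F, G, \<alpha>) = Id (fun_cat D n) F"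
    and e2: "Comp (fun_cat D n) (F, G, \<alpha>) g = Id (fun_cat D n) G"
    and a: "diag_arr D n (F,G,\<alpha>)"
    unfolding is_iso_def by auto
  from g obtain \<beta> where gb: "g = (G, F, \<beta>)" "diag_arr D n (G, F, \<beta>)" by (auto simp: hom_fc)
  have b1: "Comp D (\<beta> i) (\<alpha> i) = Id D (vtx D F i)" using e1 assms(2) gb(1) by (auto dest: fun_cong[where x=i])
  have b2: "Comp D (\<alpha> i) (\<beta> i) = Id D (vtx D G i)" using e2 assms(2) gb(1) by (auto dest: fun_cong[where x=i])
  have "\<alpha> i \<in> hom D (vtx D F i) (vtx D G i)" "\<beta> i \<in> hom D (vtx D G i) (vtx D F i)"
    using a gb(2) assms(2) unfolding diag_arr_def by auto
  then show ?thesis using b1 b2 unfolding is_iso_def hom_def by auto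
qed



context cat begin

lemma id_iso: "a \<in> Ob D \<Longrightarrow> is_iso D (Id D a)"
  using id_hom[of a] idl[OF id_hom[of a]] unfolding is_iso_def hom_def by auto

lemma iso_fc:
  assumes d: "diag_arr D n (F, G, \<alpha>)" and i: "\<And>i. i \<le> n \<Longrightarrow> is_iso D (\<alpha> i)"
  shows "is_iso (fun_cat D n) (F, G, \<alpha>)"
proof -
  define \<beta> where "\<beta> = (\<lambda>i. if i \<le> n then inv_ar D (\<alpha> i) else undefined)"
  have dF: "diagram D n F" and dG: "diagram D n G"
    and ah: "\<And>i. i \<le> n \<Longrightarrow> \<alpha> i \<in> hom D (vtx D F i) (vtx D G i)"
    and an: "\<And>i j. i \<le> j \<Longrightarrow> j \<le> n \<Longrightarrow> Comp D (\<alpha> j) (F i j) = Comp D (G i j) (\<alpha> i)"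
    using d unfolding diag_arr_def by auto
  have Fh: "\<And>i j. i \<le> j \<Longrightarrow> j \<le> n \<Longrightarrow> F i j \<in> hom D (vtx D F i) (vtx D F j)" using dF unfolding diagram_def by auto
  have Gh: "\<And>i j. i \<le> j \<Longrightarrow> j \<le> n \<Longrightarrow> G i j \<in> hom D (vtx D G i) (vtx D G j)" using dG unfolding diagram_def by auto
  have bi: "\<And>i. i \<le> n \<Longrightarrow> \<beta> i \<in> hom D (vtx D G i) (vtx D F i) \<and> Comp D (\<beta> i) (\<alpha> i) = Id D (vtx D F i)
     \<and> Comp D (\<alpha> i) (\<beta> i) = Id D (vtx D G i)"
    using inv_ar[OF i ah] \<beta>_def by auto
  have db: "diag_arr D n (G, F, \<beta>)"
    unfolding diag_arr_def
  proof (simp only: prod.case, intro conjI allI impI)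
    show "diagram D n G" "diagram D n F" using dG dF .
    fix i :: nat
    show "i \<le> n \<Longrightarrow> \<beta> i \<in> hom D (vtx D G i) (vtx D F i)" using bi by blast
    show "n < i \<Longrightarrow> \<beta> i = undefined" by (simp add: \<beta>_def)
  next
    fix i j :: nat assume a: "i \<le> j \<and> j \<le> n"
    have "Comp D (inv_ar D (\<alpha> j)) (G i j) = Comp D (F i j) (inv_ar D (\<alpha> i))"
      by (rule swap[OF ah i ah i Fh Gh]) (use a an in auto)
    then show "Comp D (\<beta> j) (G i j) = Comp D (F i j) (\<beta> i)" using a by (simp add: \<beta>_def)
  qed
  have c1: "Comp (fun_cat D n) (G, F, \<beta>) (F, G, \<alpha>) = Id (fun_cat D n) F"
    using bi by (auto intro!: ext)
  have c2: "Comp (fun_cat D n) (F, G, \<alpha>) (G, F, \<beta>) = Id (fun_cat D n) G"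
    using bi by (auto intro!: ext)
  have gh: "(G, F, \<beta>) \<in> hom (fun_cat D n) G F" using db by (simp add: hom_fc)
  show ?thesis unfolding is_iso_def
  proof (intro conjI)
    show "(F, G, \<alpha>) \<in> Ar (fun_cat D n)" using d by simp
    show "\<exists>g\<in>hom (fun_cat D n) (Cod (fun_cat D n) (F, G, \<alpha>)) (Dom (fun_cat D n) (F, G, \<alpha>)).
       Comp (fun_cat D n) g (F, G, \<alpha>) = Id (fun_cat D n) (Dom (fun_cat D n) (F, G, \<alpha>)) \<and>
       Comp (fun_cat D n) (F, G, \<alpha>) g = Id (fun_cat D n) (Cod (fun_cat D n) (F, G, \<alpha>))"
      by (rule bexI[where x="(G, F, \<beta>)"]) (use gh c1 c2 in \<open>simp only: fc_simps(3,4)\<close>)+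
  qed
qed

end

definition tc :: "('m diag \<Rightarrow> 'm diag_arr) \<Rightarrow> 'm diag \<Rightarrow> nat \<Rightarrow> 'm" where
  "tc \<theta> X = snd (snd (\<theta> X))"

definition fv :: "('o,'m) category \<Rightarrow> ('m diag \<Rightarrow> 'm diag) \<Rightarrow> 'm diag \<Rightarrow> nat \<Rightarrow> 'o" where
  "fv D so X i = (if i = 0 then vtx D X 0 else if i = 1 then vtx D (so X) 1 else vtx D X 1)"

definition fto :: "('o,'m) category \<Rightarrow> ('m diag \<Rightarrow> 'm diag) \<Rightarrow> ('m diag \<Rightarrow> 'm diag_arr) \<Rightarrow> 'm diag \<Rightarrow> 'm diag" where
  "fto D so \<theta> X = (\<lambda>i j. if i = j \<and> j \<le> 2 then Id D (fv D so X i)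
     else if i = 0 \<and> j = 1 then Comp D (so X 0 1) (inv_ar D (tc \<theta> X 0))
     else if i = 1 \<and> j = 2 then Comp D (tc \<theta> X 1) (so X 1 2)
     else if i = 0 \<and> j = 2 then X 0 1 else undefined)"

lemma six: "(i::nat) \<le> j \<Longrightarrow> j \<le> 2 \<Longrightarrow> (i=0\<and>j=0) \<or> (i=0\<and>j=1) \<or> (i=0\<and>j=2) \<or> (i=1\<and>j=1) \<or> (i=1\<and>j=2) \<or> (i=2\<and>j=2)"
  by arith

lemma two: "(i::nat) \<le> j \<Longrightarrow> j \<le> 1 \<Longrightarrow> (i=0\<and>j=0) \<or> (i=0\<and>j=1) \<or> (i=1\<and>j=1)"
  by arith

definition fta :: "('o,'m) category \<Rightarrow> ('m diag \<Rightarrow> 'm diag) \<Rightarrow> ('m diag_arr \<Rightarrow> 'm diag_arr) \<Rightarrow> ('m diag \<Rightarrow> 'm diag_arr) \<Rightarrow> 'm diag_arr \<Rightarrow> 'm diag_arr" where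
  "fta D so sa \<theta> f = (case f of (X, Y, \<phi>) \<Rightarrow> (fto D so \<theta> X, fto D so \<theta> Y,
     \<lambda>i. if i = 0 then \<phi> 0 else if i = 1 then snd (snd (sa f)) 1 else if i = 2 then \<phi> 1 else undefined))"

definition feta :: "('o,'m) category \<Rightarrow> ('m diag \<Rightarrow> 'm diag) \<Rightarrow> ('m diag \<Rightarrow> 'm diag_arr) \<Rightarrow> 'm diag \<Rightarrow> 'm diag_arr" where
  "feta D so \<theta> X = (fto D so \<theta> X, so X, \<lambda>i. if i = 0 then inv_ar D (tc \<theta> X 0) else if i = 1 then Id D (vtx D (so X) 1)
     else if i = 2 then inv_ar D (tc \<theta> X 1) else undefined)"

lemma aux3: "s = Comp D a b \<Longrightarrow> k0 = Comp D p0 q0 \<Longrightarrow> k1 = Comp D p1 q1 \<Longrightarrow>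
  (\<lambda>i::nat. if i = 0 then k0 else if i = 1 then s else if i = 2 then k1 else undefined) =
  (\<lambda>i. if i \<le> 2 then Comp D (if i = 0 then p0 else if i = 1 then a else if i = 2 then p1 else undefined)
                         (if i = 0 then q0 else if i = 1 then b else if i = 2 then q1 else undefined) else undefined)"
  by (auto intro!: ext)

locale pff = cat D for D :: "('o,'m) category" +
  fixes so :: "'m diag \<Rightarrow> 'm diag" and sa :: "'m diag_arr \<Rightarrow> 'm diag_arr" and \<theta> :: "'m diag \<Rightarrow> 'm diag_arr"
  assumes F: "is_functor (fun_cat D 1) (fun_cat D 2) so sa"
  and N: "nat_iso (fun_cat D 1) (fun_cat D 1) (restr_ob \<circ> so) (restr_ar \<circ> sa) (\<lambda>X. X) (\<lambda>f. f) \<theta>"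
begin

lemma diag_facts:
  assumes "diagram D n X"
  shows "\<And>i j. i \<le> j \<Longrightarrow> j \<le> n \<Longrightarrow> X i j \<in> hom D (vtx D X i) (vtx D X j)"
    "\<And>i j. \<not> (i \<le> j \<and> j \<le> n) \<Longrightarrow> X i j = undefined"
    "\<And>i. i \<le> n \<Longrightarrow> vtx D X i \<in> Ob D"
    "\<And>i. i \<le> n \<Longrightarrow> X i i = Id D (vtx D X i)"
    "\<And>i j k. i \<le> j \<Longrightarrow> j \<le> k \<Longrightarrow> k \<le> n \<Longrightarrow> X i k = Comp D (X j k) (X i j)"
  using assms unfolding diagram_def by auto

lemma obj_facts:
  assumes X: "diagram D 1 X"
  shows "diagram D 2 (so X)"
    "\<theta> X = (restr_ob (so X), X, tc \<theta> X)"
    "tc \<theta> X 0 \<in> hom D (vtx D (so X) 0) (vtx D X 0)" "is_iso D (tc \<theta> X 0)"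
    "tc \<theta> X 1 \<in> hom D (vtx D (so X) 2) (vtx D X 1)" "is_iso D (tc \<theta> X 1)"
    "Comp D (tc \<theta> X 1) (so X 0 2) = Comp D (X 0 1) (tc \<theta> X 0)"
    "\<And>i. 1 < i \<Longrightarrow> tc \<theta> X i = undefined"
proof -
  show sX: "diagram D 2 (so X)" using F X unfolding is_functor_def by auto
  have h: "\<theta> X \<in> hom (fun_cat D 1) (restr_ob (so X)) X" and i: "is_iso (fun_cat D 1) (\<theta> X)"
    using N X unfolding nat_iso_def by auto
  then obtain \<alpha> where a: "\<theta> X = (restr_ob (so X), X, \<alpha>)" "diag_arr D 1 (restr_ob (so X), X, \<alpha>)"
    by (auto simp: hom_fc)
  have tc: "tc \<theta> X = \<alpha>" using a by (simp add: tc_def)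
  show "\<theta> X = (restr_ob (so X), X, tc \<theta> X)" using a tc by simp
  show "tc \<theta> X 0 \<in> hom D (vtx D (so X) 0) (vtx D X 0)" "tc \<theta> X 1 \<in> hom D (vtx D (so X) 2) (vtx D X 1)"
    "\<And>i. 1 < i \<Longrightarrow> tc \<theta> X i = undefined"
    using a(2) tc unfolding diag_arr_def by auto
  show "is_iso D (tc \<theta> X 0)" "is_iso D (tc \<theta> X 1)" using iso_fc_comp[of D 1 _ X \<alpha>] i a tc by auto
  have "Comp D (\<alpha> 1) (restr_ob (so X) 0 1) = Comp D (X 0 1) (\<alpha> 0)"
    using a(2) unfolding diag_arr_def by auto
  then show "Comp D (tc \<theta> X 1) (so X 0 2) = Comp D (X 0 1) (tc \<theta> X 0)"
    using tc by (simp add: restr_ob_def)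
qed


lemma arr_facts:
  assumes f: "diag_arr D 1 (X, Y, \<phi>)"
  shows "sa (X, Y, \<phi>) = (so X, so Y, snd (snd (sa (X, Y, \<phi>))))"
    "diag_arr D 2 (sa (X, Y, \<phi>))"
    "Comp D (tc \<theta> Y 0) (snd (snd (sa (X, Y, \<phi>))) 0) = Comp D (\<phi> 0) (tc \<theta> X 0)"
    "Comp D (tc \<theta> Y 1) (snd (snd (sa (X, Y, \<phi>))) 2) = Comp D (\<phi> 1) (tc \<theta> X 1)"
proof -
  have X: "diagram D 1 X" and Y: "diagram D 1 Y" using f unfolding diag_arr_def by auto
  have "sa (X, Y, \<phi>) \<in> hom (fun_cat D 2) (so X) (so Y)" using F f unfolding is_functor_def by auto
  then obtain \<sigma> where s: "sa (X, Y, \<phi>) = (so X, so Y, \<sigma>)" "diag_arr D 2 (so X, so Y, \<sigma>)"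
    by (auto simp: hom_fc)
  show "sa (X, Y, \<phi>) = (so X, so Y, snd (snd (sa (X, Y, \<phi>))))" "diag_arr D 2 (sa (X, Y, \<phi>))"
    using s by auto
  have "Comp (fun_cat D 1) (\<theta> Y) (restr_ar (sa (X, Y, \<phi>))) = Comp (fun_cat D 1) (X, Y, \<phi>) (\<theta> X)"
    using N f unfolding nat_iso_def by auto
  then have e: "\<And>i. snd (snd (Comp (fun_cat D 1) (\<theta> Y) (restr_ar (sa (X, Y, \<phi>))))) i
     = snd (snd (Comp (fun_cat D 1) (X, Y, \<phi>) (\<theta> X))) i" by simp
  from e[of 0] e[of 1] obj_facts(2)[OF X] obj_facts(2)[OF Y] s(1)
  show "Comp D (tc \<theta> Y 0) (snd (snd (sa (X, Y, \<phi>))) 0) = Comp D (\<phi> 0) (tc \<theta> X 0)"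
    "Comp D (tc \<theta> Y 1) (snd (snd (sa (X, Y, \<phi>))) 2) = Comp D (\<phi> 1) (tc \<theta> X 1)"
    by (auto simp: restr_ar_def)
qed

lemma fto_facts:
  assumes X: "diagram D 1 X"
  shows "diagram D 2 (fto D so \<theta> X)"
    "vtx D (fto D so \<theta> X) 0 = vtx D X 0"
    "vtx D (fto D so \<theta> X) 1 = vtx D (so X) 1"
    "vtx D (fto D so \<theta> X) 2 = vtx D X 1"
    "restr_ob (fto D so \<theta> X) = X"
proof -
  note o = obj_facts[OF X]
  note dX = diag_facts[OF X] and dS = diag_facts[OF o(1)]
  let ?T = "fto D so \<theta> X"
  define u0 where "u0 = inv_ar D (tc \<theta> X 0)"
  have u0: "u0 \<in> hom D (vtx D X 0) (vtx D (so X) 0)" "Comp D (tc \<theta> X 0) u0 = Id D (vtx D X 0)"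
    using inv_ar[OF o(4) o(3)] u0_def by auto
  have ob: "vtx D X 0 \<in> Ob D" "vtx D X 1 \<in> Ob D" "vtx D (so X) 1 \<in> Ob D"
    using dX(3) dS(3) by auto
  have v: "vtx D ?T 0 = vtx D X 0" "vtx D ?T 1 = vtx D (so X) 1" "vtx D ?T 2 = vtx D X 1"
    using ob id_hom by (auto simp: vtx_def fto_def fv_def hom_def)
  then show "vtx D ?T 0 = vtx D X 0" "vtx D ?T 1 = vtx D (so X) 1" "vtx D ?T 2 = vtx D X 1" by auto
  have T01: "?T 0 1 = Comp D (so X 0 1) u0" and T12: "?T 1 2 = Comp D (tc \<theta> X 1) (so X 1 2)"
    and T02: "?T 0 2 = X 0 1" and T00: "?T 0 0 = Id D (vtx D X 0)" and T11: "?T 1 1 = Id D (vtx D (so X) 1)"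
    and T22: "?T 2 2 = Id D (vtx D X 1)"
    by (simp_all add: fto_def fv_def u0_def)
  have h01: "?T 0 1 \<in> hom D (vtx D X 0) (vtx D (so X) 1)" using T01 comp_hom[OF u0(1) dS(1)[of 0 1]] by simp
  have h12: "?T 1 2 \<in> hom D (vtx D (so X) 1) (vtx D X 1)" using T12 comp_hom[OF dS(1)[of 1 2] o(5)] by simp
  have h02: "?T 0 2 \<in> hom D (vtx D X 0) (vtx D X 1)" using T02 dX(1)[of 0 1] by simp
  have hid: "?T 0 0 \<in> hom D (vtx D X 0) (vtx D X 0)" "?T 1 1 \<in> hom D (vtx D (so X) 1) (vtx D (so X) 1)"
     "?T 2 2 \<in> hom D (vtx D X 1) (vtx D X 1)" using T00 T11 T22 ob id_hom by auto
  have c012: "?T 0 2 = Comp D (?T 1 2) (?T 0 1)"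
  proof -
    have s01: "so X 0 1 \<in> hom D (vtx D (so X) 0) (vtx D (so X) 1)" using dS(1) by auto
    have s12: "so X 1 2 \<in> hom D (vtx D (so X) 1) (vtx D (so X) 2)" using dS(1) by auto
    have "Comp D (?T 1 2) (?T 0 1) = Comp D (tc \<theta> X 1) (Comp D (so X 1 2) (Comp D (so X 0 1) u0))"
      using T01 T12 assoc[OF comp_hom[OF u0(1) s01] s12 o(5)] by simp
    also have "\<dots> = Comp D (tc \<theta> X 1) (Comp D (so X 0 2) u0)"
      using assoc[OF u0(1) s01 s12] dS(5)[of 0 1 2] by simp
    also have "\<dots> = Comp D (Comp D (tc \<theta> X 1) (so X 0 2)) u0"
      using assoc[OF u0(1) comp_hom[OF s01 s12] o(5)] dS(5)[of 0 1 2] by simp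
    also have "\<dots> = Comp D (Comp D (X 0 1) (tc \<theta> X 0)) u0" using o(7) by simp
    also have "\<dots> = Comp D (X 0 1) (Comp D (tc \<theta> X 0) u0)"
      using assoc[OF u0(1) o(3) dX(1)[of 0 1]] by simp
    also have "\<dots> = X 0 1" using u0(2) idr[OF dX(1)[of 0 1]] by simp
    finally show ?thesis using T02 by simp
  qed
  show "diagram D 2 ?T"
    unfolding diagram_def
  proof (intro conjI allI impI)
    fix i j :: nat assume "i \<le> j \<and> j \<le> 2"
    then show "?T i j \<in> hom D (vtx D ?T i) (vtx D ?T j)"
      using six[of i j] v h01 h12 h02 hid by auto
  next
    fix i j :: nat assume "\<not> (i \<le> j \<and> j \<le> 2)"
    then show "?T i j = undefined" by (auto simp: fto_def)
  next
    fix i :: nat assume "i \<le> 2"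
    then have "i = 0 \<or> i = 1 \<or> i = 2" by arith
    then show "vtx D ?T i \<in> Ob D" "?T i i = Id D (vtx D ?T i)" using v ob T00 T11 T22 by auto
  next
    fix i j k :: nat assume a: "i \<le> j \<and> j \<le> k \<and> k \<le> 2"
    then have "(i=0\<and>j=0\<and>k=0) \<or> (i=0\<and>j=0\<and>k=1) \<or> (i=0\<and>j=0\<and>k=2) \<or> (i=0\<and>j=1\<and>k=1) \<or>
      (i=0\<and>j=1\<and>k=2) \<or> (i=0\<and>j=2\<and>k=2) \<or> (i=1\<and>j=1\<and>k=1) \<or> (i=1\<and>j=1\<and>k=2) \<or>
      (i=1\<and>j=2\<and>k=2) \<or> (i=2\<and>j=2\<and>k=2)" by arith
    then show "?T i k = Comp D (?T j k) (?T i j)"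
      using c012 T00 T11 T22 idl idr h01 h12 h02 hid by auto
  qed
  show "restr_ob ?T = X"
  proof (intro ext)
    fix i j
    show "restr_ob ?T i j = X i j"
    proof (cases "i \<le> j \<and> j \<le> 1")
      case True
      then show ?thesis using two[of i j] T00 T22 T02 dX(4)[of 0] dX(4)[of 1] by (auto simp: restr_ob_def)
    next
      case False
      then show ?thesis using dX(2)[of i j] by (auto simp add: restr_ob_def)
    qed
  qed
qed


lemma fta_facts:
  assumes f: "diag_arr D 1 (X, Y, \<phi>)"
  shows "diag_arr D 2 (fta D so sa \<theta> (X, Y, \<phi>))" "restr_ar (fta D so sa \<theta> (X, Y, \<phi>)) = (X, Y, \<phi>)"
proof -
  have X: "diagram D 1 X" and Y: "diagram D 1 Y" using f unfolding diag_arr_def by auto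
  note oX = obj_facts[OF X] and oY = obj_facts[OF Y]
  note tX = fto_facts[OF X] and tY = fto_facts[OF Y]
  note dX = diag_facts[OF X] and dY = diag_facts[OF Y]
  note sX = diag_facts[OF oX(1)] and sY = diag_facts[OF oY(1)]
  note af = arr_facts[OF f]
  define \<sigma> where "\<sigma> = snd (snd (sa (X, Y, \<phi>)))"
  have sae: "sa (X, Y, \<phi>) = (so X, so Y, \<sigma>)" unfolding \<sigma>_def by (rule af(1))
  have sd: "diag_arr D 2 (so X, so Y, \<sigma>)" using af(2) sae by simp
  have sh: "\<And>i. i \<le> 2 \<Longrightarrow> \<sigma> i \<in> hom D (vtx D (so X) i) (vtx D (so Y) i)"
    and sn: "\<And>i j. i \<le> j \<Longrightarrow> j \<le> 2 \<Longrightarrow> Comp D (\<sigma> j) (so X i j) = Comp D (so Y i j) (\<sigma> i)"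
    using sd unfolding diag_arr_def by auto
  have ph: "\<And>i. i \<le> 1 \<Longrightarrow> \<phi> i \<in> hom D (vtx D X i) (vtx D Y i)"
    and pu: "\<And>i. 1 < i \<Longrightarrow> \<phi> i = undefined"
    and pn: "Comp D (\<phi> 1) (X 0 1) = Comp D (Y 0 1) (\<phi> 0)"
    using f unfolding diag_arr_def by auto
  define \<beta> where "\<beta> = (\<lambda>i::nat. if i = 0 then \<phi> 0 else if i = 1 then \<sigma> 1 else if i = 2 then \<phi> 1 else undefined)"
  have fe: "fta D so sa \<theta> (X, Y, \<phi>) = (fto D so \<theta> X, fto D so \<theta> Y, \<beta>)"
    unfolding fta_def \<beta>_def \<sigma>_def by simp
  let ?TX = "fto D so \<theta> X" and ?TY = "fto D so \<theta> Y"
  have b0: "\<beta> 0 \<in> hom D (vtx D ?TX 0) (vtx D ?TY 0)" using ph[of 0] tX tY by (simp add: \<beta>_def)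
  have b1: "\<beta> 1 \<in> hom D (vtx D ?TX 1) (vtx D ?TY 1)" using sh[of 1] tX tY by (simp add: \<beta>_def)
  have b2: "\<beta> 2 \<in> hom D (vtx D ?TX 2) (vtx D ?TY 2)" using ph[of 1] tX tY by (simp add: \<beta>_def)
  define u0X where "u0X = inv_ar D (tc \<theta> X 0)"
  define u0Y where "u0Y = inv_ar D (tc \<theta> Y 0)"
  have u0X: "u0X \<in> hom D (vtx D X 0) (vtx D (so X) 0)" using inv_ar[OF oX(4) oX(3)] u0X_def by auto
  have u0Y: "u0Y \<in> hom D (vtx D Y 0) (vtx D (so Y) 0)" using inv_ar[OF oY(4) oY(3)] u0Y_def by auto
  have sw0: "Comp D u0Y (\<phi> 0) = Comp D (\<sigma> 0) u0X"
    unfolding u0X_def u0Y_def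
    by (rule swap[OF oX(3,4) oY(3,4) sh[of 0] ph[of 0]]) (use af(3) \<sigma>_def in auto)
  have TX01: "?TX 0 1 = Comp D (so X 0 1) u0X" "?TY 0 1 = Comp D (so Y 0 1) u0Y"
    "?TX 1 2 = Comp D (tc \<theta> X 1) (so X 1 2)" "?TY 1 2 = Comp D (tc \<theta> Y 1) (so Y 1 2)"
    "?TX 0 2 = X 0 1" "?TY 0 2 = Y 0 1"
    by (simp_all add: fto_def u0X_def u0Y_def)
  have sX01: "so X 0 1 \<in> hom D (vtx D (so X) 0) (vtx D (so X) 1)"
   and sY01: "so Y 0 1 \<in> hom D (vtx D (so Y) 0) (vtx D (so Y) 1)"
   and sX12: "so X 1 2 \<in> hom D (vtx D (so X) 1) (vtx D (so X) 2)"
   and sY12: "so Y 1 2 \<in> hom D (vtx D (so Y) 1) (vtx D (so Y) 2)"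
    using sX(1) sY(1) by auto
  have n01: "Comp D (\<beta> 1) (?TX 0 1) = Comp D (?TY 0 1) (\<beta> 0)"
  proof -
    have "Comp D (\<beta> 1) (?TX 0 1) = Comp D (\<sigma> 1) (Comp D (so X 0 1) u0X)" using TX01 by (simp add: \<beta>_def)
    also have "\<dots> = Comp D (Comp D (\<sigma> 1) (so X 0 1)) u0X" using assoc[OF u0X sX01 sh[of 1]] by simp
    also have "\<dots> = Comp D (Comp D (so Y 0 1) (\<sigma> 0)) u0X" using sn[of 0 1] by simp
    also have "\<dots> = Comp D (so Y 0 1) (Comp D (\<sigma> 0) u0X)" using assoc[OF u0X sh[of 0] sY01] by simp
    also have "\<dots> = Comp D (so Y 0 1) (Comp D u0Y (\<phi> 0))" using sw0 by simp
    also have "\<dots> = Comp D (?TY 0 1) (\<beta> 0)" using assoc[OF ph[of 0] u0Y sY01] TX01 by (simp add: \<beta>_def)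
    finally show ?thesis .
  qed
  have n12: "Comp D (\<beta> 2) (?TX 1 2) = Comp D (?TY 1 2) (\<beta> 1)"
  proof -
    have "Comp D (\<beta> 2) (?TX 1 2) = Comp D (\<phi> 1) (Comp D (tc \<theta> X 1) (so X 1 2))" using TX01 by (simp add: \<beta>_def)
    also have "\<dots> = Comp D (Comp D (\<phi> 1) (tc \<theta> X 1)) (so X 1 2)" using assoc[OF sX12 oX(5) ph[of 1]] by simp
    also have "\<dots> = Comp D (Comp D (tc \<theta> Y 1) (\<sigma> 2)) (so X 1 2)" using af(4) \<sigma>_def by simp
    also have "\<dots> = Comp D (tc \<theta> Y 1) (Comp D (\<sigma> 2) (so X 1 2))" using assoc[OF sX12 sh[of 2] oY(5)] by simp
    also have "\<dots> = Comp D (tc \<theta> Y 1) (Comp D (so Y 1 2) (\<sigma> 1))" using sn[of 1 2] by simp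
    also have "\<dots> = Comp D (?TY 1 2) (\<beta> 1)" using assoc[OF sh[of 1] sY12 oY(5)] TX01 by (simp add: \<beta>_def)
    finally show ?thesis .
  qed
  have n02: "Comp D (\<beta> 2) (?TX 0 2) = Comp D (?TY 0 2) (\<beta> 0)" using pn TX01 by (simp add: \<beta>_def)
  have dTX: "\<And>i j. i \<le> j \<Longrightarrow> j \<le> 2 \<Longrightarrow> ?TX i j \<in> hom D (vtx D ?TX i) (vtx D ?TX j)"
    "\<And>i. i \<le> 2 \<Longrightarrow> ?TX i i = Id D (vtx D ?TX i)" using diag_facts(1,4)[OF tX(1)] by blast+
  have dTY: "\<And>i j. i \<le> j \<Longrightarrow> j \<le> 2 \<Longrightarrow> ?TY i j \<in> hom D (vtx D ?TY i) (vtx D ?TY j)"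
    "\<And>i. i \<le> 2 \<Longrightarrow> ?TY i i = Id D (vtx D ?TY i)" using diag_facts(1,4)[OF tY(1)] by blast+
  have nii: "\<And>i. i \<le> 2 \<Longrightarrow> \<beta> i \<in> hom D (vtx D ?TX i) (vtx D ?TY i)"
  proof -
    fix i :: nat assume "i \<le> 2" then have "i = 0 \<or> i = 1 \<or> i = 2" by arith
    then show "\<beta> i \<in> hom D (vtx D ?TX i) (vtx D ?TY i)" using b0 b1 b2 by auto
  qed
  have "diag_arr D 2 (?TX, ?TY, \<beta>)"
    unfolding diag_arr_def
  proof (simp only: prod.case, intro conjI allI impI)
    show "diagram D 2 ?TX" "diagram D 2 ?TY" using tX(1) tY(1) .
    fix i :: nat
    show "i \<le> 2 \<Longrightarrow> \<beta> i \<in> hom D (vtx D ?TX i) (vtx D ?TY i)" by (rule nii)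
    show "2 < i \<Longrightarrow> \<beta> i = undefined" by (simp add: \<beta>_def)
  next
    fix i j :: nat assume a: "i \<le> j \<and> j \<le> 2"
    show "Comp D (\<beta> j) (?TX i j) = Comp D (?TY i j) (\<beta> i)"
    proof (cases "i = j")
      case True
      then show ?thesis using a nii[of i] dTX(2)[of i] dTY(2)[of i] idl[OF nii[of i]] idr[OF nii[of i]] by simp
    next
      case False
      then have "(i=0\<and>j=1) \<or> (i=1\<and>j=2) \<or> (i=0\<and>j=2)" using a by arith
      then show ?thesis using n01 n12 n02 by (elim disjE) simp_all
    qed
  qed
  then show "diag_arr D 2 (fta D so sa \<theta> (X, Y, \<phi>))" using fe by simp
  have "(\<lambda>i. if i \<le> 1 then \<beta> (2 * i) else undefined) = \<phi>"
  proof
    fix i :: nat show "(if i \<le> 1 then \<beta> (2 * i) else undefined) = \<phi> i"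
      using pu[of i] by (cases "i = 0"; cases "i = 1") (auto simp: \<beta>_def)
  qed
  then show "restr_ar (fta D so sa \<theta> (X, Y, \<phi>)) = (X, Y, \<phi>)"
    using fe tX(5) tY(5) by (simp add: restr_ar_def)
qed


lemma fta_eq: "fta D so sa \<theta> (X, Y, \<phi>) = (fto D so \<theta> X, fto D so \<theta> Y,
     \<lambda>i. if i = 0 then \<phi> 0 else if i = 1 then snd (snd (sa (X, Y, \<phi>))) 1 else if i = 2 then \<phi> 1 else undefined)"
  by (simp add: fta_def)

lemma fto_functor: "is_functor (fun_cat D 1) (fun_cat D 2) (fto D so \<theta>) (fta D so sa \<theta>)"
  unfolding is_functor_def
proof (intro conjI ballI impI)
  fix X assume "X \<in> Ob (fun_cat D 1)"
  then show "fto D so \<theta> X \<in> Ob (fun_cat D 2)" using fto_facts(1) by auto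
next
  fix f assume "f \<in> Ar (fun_cat D 1)"
  then obtain X Y \<phi> where f: "f = (X, Y, \<phi>)" "diag_arr D 1 (X, Y, \<phi>)" by (cases f) auto
  show "fta D so sa \<theta> f \<in> hom (fun_cat D 2) (fto D so \<theta> (Dom (fun_cat D 1) f)) (fto D so \<theta> (Cod (fun_cat D 1) f))"
    using fta_facts(1)[OF f(2)] f(1) by (simp add: hom_fc fta_eq)
next
  fix X assume "X \<in> Ob (fun_cat D 1)"
  then have X: "diagram D 1 X" by simp
  define \<iota> where "\<iota> = (\<lambda>i. if i \<le> (1::nat) then Id D (vtx D X i) else undefined)"
  have I: "Id (fun_cat D 1) X = (X, X, \<iota>)" by (simp add: \<iota>_def)
  have "sa (Id (fun_cat D 1) X) = Id (fun_cat D 2) (so X)" using F X unfolding is_functor_def by auto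
  then have s1: "snd (snd (sa (X, X, \<iota>))) 1 = Id D (vtx D (so X) 1)" unfolding I by simp
  have "fta D so sa \<theta> (X, X, \<iota>) = (fto D so \<theta> X, fto D so \<theta> X,
     \<lambda>i. if i = 0 then \<iota> 0 else if i = 1 then snd (snd (sa (X, X, \<iota>))) 1 else if i = 2 then \<iota> 1 else undefined)"
    by (rule fta_eq)
  also have "\<dots> = Id (fun_cat D 2) (fto D so \<theta> X)"
    unfolding fc_simps(5) prod.inject
  proof (intro conjI refl ext)
    fix i :: nat
    show "(if i = 0 then \<iota> 0 else if i = 1 then snd (snd (sa (X, X, \<iota>))) 1 else if i = 2 then \<iota> 1 else undefined)
      = (if i \<le> 2 then Id D (vtx D (fto D so \<theta> X) i) else undefined)"
    proof (cases "i = 0 \<or> i = 1 \<or> i = 2")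
      case True
      then show ?thesis using s1 fto_facts(2,3,4)[OF X] by (auto simp: \<iota>_def)
    next
      case False
      then show ?thesis by auto
    qed
  qed
  finally show "fta D so sa \<theta> (Id (fun_cat D 1) X) = Id (fun_cat D 2) (fto D so \<theta> X)" unfolding I .
next
  fix f g assume fa: "f \<in> Ar (fun_cat D 1)" and ga: "g \<in> Ar (fun_cat D 1)"
    and c: "Cod (fun_cat D 1) f = Dom (fun_cat D 1) g"
  obtain X Y \<phi> where f: "f = (X, Y, \<phi>)" by (cases f) auto
  obtain Y' Z \<psi> where g: "g = (Y', Z, \<psi>)" by (cases g) auto
  have Y': "Y' = Y" using c f g by simp
  have Fc: "\<forall>f\<in>Ar (fun_cat D 1). \<forall>g\<in>Ar (fun_cat D 1). Cod (fun_cat D 1) f = Dom (fun_cat D 1) g \<longrightarrow>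
      sa (Comp (fun_cat D 1) g f) = Comp (fun_cat D 2) (sa g) (sa f)"
    using F unfolding is_functor_def by (elim conjE) assumption
  have "sa (Comp (fun_cat D 1) g f) = Comp (fun_cat D 2) (sa g) (sa f)" using Fc fa ga c by blast
  note eq = this
  define \<sigma> where "\<sigma> = snd (snd (sa f))"
  define \<tau> where "\<tau> = snd (snd (sa g))"
  have fd: "diag_arr D 1 (X, Y, \<phi>)" using fa f by simp
  have gd: "diag_arr D 1 (Y, Z, \<psi>)" using ga g Y' by simp
  have saf: "sa f = (so X, so Y, \<sigma>)" unfolding \<sigma>_def f by (rule arr_facts(1)[OF fd])
  have sag: "sa g = (so Y, so Z, \<tau>)" unfolding \<tau>_def g Y' by (rule arr_facts(1)[OF gd])
  have "snd (snd (sa (Comp (fun_cat D 1) g f))) 1 = Comp D (\<tau> 1) (\<sigma> 1)"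
    unfolding eq saf sag by simp
  then have s1: "snd (snd (sa (Comp (fun_cat D 1) g f))) 1 = Comp D (snd (snd (sa (Y, Z, \<psi>))) 1) (snd (snd (sa (X, Y, \<phi>))) 1)"
    unfolding \<sigma>_def \<tau>_def f g Y' .
  define \<kappa> where "\<kappa> = (\<lambda>i. if i \<le> (1::nat) then Comp D (\<psi> i) (\<phi> i) else undefined)"
  have Ceq: "Comp (fun_cat D 1) g f = (X, Z, \<kappa>)" unfolding f g Y' by (simp add: \<kappa>_def)
  have s1': "snd (snd (sa (X, Z, \<kappa>))) 1 = Comp D (snd (snd (sa (Y, Z, \<psi>))) 1) (snd (snd (sa (X, Y, \<phi>))) 1)"
    using s1 unfolding Ceq .
  have L: "(\<lambda>i::nat. if i = 0 then \<kappa> 0 else if i = 1 then snd (snd (sa (X, Z, \<kappa>))) 1 else if i = 2 then \<kappa> 1 else undefined) =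
      (\<lambda>i. if i \<le> 2 then Comp D (if i = 0 then \<psi> 0 else if i = 1 then snd (snd (sa (Y, Z, \<psi>))) 1 else if i = 2 then \<psi> 1 else undefined)
                             (if i = 0 then \<phi> 0 else if i = 1 then snd (snd (sa (X, Y, \<phi>))) 1 else if i = 2 then \<phi> 1 else undefined) else undefined)"
    by (rule aux3[OF s1']) (simp_all add: \<kappa>_def)
  show "fta D so sa \<theta> (Comp (fun_cat D 1) g f) = Comp (fun_cat D 2) (fta D so sa \<theta> g) (fta D so sa \<theta> f)"
    unfolding Ceq unfolding f g Y' fta_eq fc_simps(6) L ..
qed


lemma lam_eq: "(\<And>i. i \<le> n \<Longrightarrow> Comp D (a i) (b i) = Comp D (c i) (d i)) \<Longrightarrow>
  (\<lambda>i. if i \<le> n then Comp D (a i) (b i) else undefined) = (\<lambda>i. if i \<le> n then Comp D (c i) (d i) else undefined)"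
  by auto

lemma feta_facts:
  assumes X: "diagram D 1 X"
  shows "feta D so \<theta> X \<in> hom (fun_cat D 2) (fto D so \<theta> X) (so X)" "is_iso (fun_cat D 2) (feta D so \<theta> X)"
proof -
  note o = obj_facts[OF X]
  note tX = fto_facts[OF X]
  note dX = diag_facts[OF X] and sX = diag_facts[OF o(1)]
  define \<eta> where "\<eta> = (\<lambda>i::nat. if i = 0 then inv_ar D (tc \<theta> X 0) else if i = 1 then Id D (vtx D (so X) 1)
     else if i = 2 then inv_ar D (tc \<theta> X 1) else undefined)"
  have fe: "feta D so \<theta> X = (fto D so \<theta> X, so X, \<eta>)" by (simp add: feta_def \<eta>_def)
  let ?T = "fto D so \<theta> X"
  define u0 where "u0 = inv_ar D (tc \<theta> X 0)"
  define u1 where "u1 = inv_ar D (tc \<theta> X 1)"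
  note i0 = inv_ar[OF o(4) o(3), folded u0_def] and i1 = inv_ar[OF o(6) o(5), folded u1_def]
  have ob1: "vtx D (so X) 1 \<in> Ob D" using sX(3) by simp
  have e0: "\<eta> 0 = u0" "\<eta> 1 = Id D (vtx D (so X) 1)" "\<eta> 2 = u1" by (simp_all add: \<eta>_def u0_def u1_def)
  have eh: "\<And>i. i \<le> 2 \<Longrightarrow> \<eta> i \<in> hom D (vtx D ?T i) (vtx D (so X) i)"
  proof -
    fix i :: nat assume "i \<le> 2" then have "i = 0 \<or> i = 1 \<or> i = 2" by arith
    then show "\<eta> i \<in> hom D (vtx D ?T i) (vtx D (so X) i)"
      using e0 i0(1) i1(1) id_hom[OF ob1] tX(2,3,4) by auto
  qed
  have ei: "\<And>i. i \<le> 2 \<Longrightarrow> is_iso D (\<eta> i)"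
  proof -
    fix i :: nat assume "i \<le> 2" then have "i = 0 \<or> i = 1 \<or> i = 2" by arith
    then show "is_iso D (\<eta> i)"
      using e0 inv_is_iso[OF o(4) o(3)] inv_is_iso[OF o(6) o(5)] id_iso[OF ob1] u0_def u1_def by auto
  qed
  have T: "?T 0 1 = Comp D (so X 0 1) u0" "?T 1 2 = Comp D (tc \<theta> X 1) (so X 1 2)" "?T 0 2 = X 0 1"
    by (simp_all add: fto_def u0_def)
  have s01: "so X 0 1 \<in> hom D (vtx D (so X) 0) (vtx D (so X) 1)"
   and s12: "so X 1 2 \<in> hom D (vtx D (so X) 1) (vtx D (so X) 2)"
   and s02: "so X 0 2 \<in> hom D (vtx D (so X) 0) (vtx D (so X) 2)"
    using sX(1) by auto
  have n01: "Comp D (\<eta> 1) (?T 0 1) = Comp D (so X 0 1) (\<eta> 0)"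
    using T e0 idl[OF comp_hom[OF i0(1) s01]] by simp
  have n12: "Comp D (\<eta> 2) (?T 1 2) = Comp D (so X 1 2) (\<eta> 1)"
  proof -
    have "Comp D (\<eta> 2) (?T 1 2) = Comp D (Comp D u1 (tc \<theta> X 1)) (so X 1 2)"
      using T e0 assoc[OF s12 o(5) i1(1)] by simp
    also have "\<dots> = so X 1 2" using i1(2) idl[OF s12] by simp
    also have "\<dots> = Comp D (so X 1 2) (\<eta> 1)" using e0 idr[OF s12] by simp
    finally show ?thesis .
  qed
  have n02: "Comp D (\<eta> 2) (?T 0 2) = Comp D (so X 0 2) (\<eta> 0)"
    unfolding T e0 u0_def u1_def
    by (rule swap[OF o(3,4) o(5,6) s02 dX(1)[of 0 1]]) (use o(7) in auto)
  have dT: "\<And>i. i \<le> 2 \<Longrightarrow> ?T i i = Id D (vtx D ?T i)" using diag_facts(4)[OF tX(1)] by blast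
  have dS: "\<And>i. i \<le> 2 \<Longrightarrow> so X i i = Id D (vtx D (so X) i)" using sX(4) by blast
  have da: "diag_arr D 2 (?T, so X, \<eta>)"
    unfolding diag_arr_def
  proof (simp only: prod.case, intro conjI allI impI)
    show "diagram D 2 ?T" "diagram D 2 (so X)" using tX(1) o(1) .
    fix i :: nat
    show "i \<le> 2 \<Longrightarrow> \<eta> i \<in> hom D (vtx D ?T i) (vtx D (so X) i)" by (rule eh)
    show "2 < i \<Longrightarrow> \<eta> i = undefined" by (simp add: \<eta>_def)
  next
    fix i j :: nat assume a: "i \<le> j \<and> j \<le> 2"
    show "Comp D (\<eta> j) (?T i j) = Comp D (so X i j) (\<eta> i)"
    proof (cases "i = j")
      case True
      then show ?thesis using a eh[of i] dT[of i] dS[of i] idl[OF eh[of i]] idr[OF eh[of i]] by simp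
    next
      case False
      then have "(i=0\<and>j=1) \<or> (i=1\<and>j=2) \<or> (i=0\<and>j=2)" using a by arith
      then show ?thesis using n01 n12 n02 by (elim disjE) simp_all
    qed
  qed
  show "feta D so \<theta> X \<in> hom (fun_cat D 2) (fto D so \<theta> X) (so X)" using fe da by (simp add: hom_fc)
  show "is_iso (fun_cat D 2) (feta D so \<theta> X)" unfolding fe by (rule iso_fc[OF da ei])
qed

lemma feta_nat:
  assumes f: "diag_arr D 1 (X, Y, \<phi>)"
  shows "Comp (fun_cat D 2) (feta D so \<theta> Y) (fta D so sa \<theta> (X, Y, \<phi>)) = Comp (fun_cat D 2) (sa (X, Y, \<phi>)) (feta D so \<theta> X)"
proof -
  have X: "diagram D 1 X" and Y: "diagram D 1 Y" using f unfolding diag_arr_def by auto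
  note oX = obj_facts[OF X] and oY = obj_facts[OF Y]
  note af = arr_facts[OF f]
  define \<sigma> where "\<sigma> = snd (snd (sa (X, Y, \<phi>)))"
  have sae: "sa (X, Y, \<phi>) = (so X, so Y, \<sigma>)" unfolding \<sigma>_def by (rule af(1))
  have sd: "diag_arr D 2 (so X, so Y, \<sigma>)" using af(2) sae by simp
  have sh: "\<And>i. i \<le> 2 \<Longrightarrow> \<sigma> i \<in> hom D (vtx D (so X) i) (vtx D (so Y) i)"
    using sd unfolding diag_arr_def by auto
  have ph: "\<And>i. i \<le> 1 \<Longrightarrow> \<phi> i \<in> hom D (vtx D X i) (vtx D Y i)"
    using f unfolding diag_arr_def by auto
  define \<beta> where "\<beta> = (\<lambda>i::nat. if i = 0 then \<phi> 0 else if i = 1 then \<sigma> 1 else if i = 2 then \<phi> 1 else undefined)"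
  have fe: "fta D so sa \<theta> (X, Y, \<phi>) = (fto D so \<theta> X, fto D so \<theta> Y, \<beta>)"
    unfolding fta_def \<beta>_def \<sigma>_def by simp
  define \<eta>X where "\<eta>X = (\<lambda>i::nat. if i = 0 then inv_ar D (tc \<theta> X 0) else if i = 1 then Id D (vtx D (so X) 1)
     else if i = 2 then inv_ar D (tc \<theta> X 1) else undefined)"
  define \<eta>Y where "\<eta>Y = (\<lambda>i::nat. if i = 0 then inv_ar D (tc \<theta> Y 0) else if i = 1 then Id D (vtx D (so Y) 1)
     else if i = 2 then inv_ar D (tc \<theta> Y 1) else undefined)"
  have eX: "feta D so \<theta> X = (fto D so \<theta> X, so X, \<eta>X)" by (simp add: feta_def \<eta>X_def)
  have eY: "feta D so \<theta> Y = (fto D so \<theta> Y, so Y, \<eta>Y)" by (simp add: feta_def \<eta>Y_def)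
  have c0: "Comp D (inv_ar D (tc \<theta> Y 0)) (\<phi> 0) = Comp D (\<sigma> 0) (inv_ar D (tc \<theta> X 0))"
    by (rule swap[OF oX(3,4) oY(3,4) sh[of 0] ph[of 0]]) (use af(3) \<sigma>_def in auto)
  have c2: "Comp D (inv_ar D (tc \<theta> Y 1)) (\<phi> 1) = Comp D (\<sigma> 2) (inv_ar D (tc \<theta> X 1))"
    by (rule swap[OF oX(5,6) oY(5,6) sh[of 2] ph[of 1]]) (use af(4) \<sigma>_def in auto)
  have c1: "Comp D (Id D (vtx D (so Y) 1)) (\<sigma> 1) = Comp D (\<sigma> 1) (Id D (vtx D (so X) 1))"
    using idl[OF sh[of 1]] idr[OF sh[of 1]] by simp
  have "(\<lambda>i. if i \<le> 2 then Comp D (\<eta>Y i) (\<beta> i) else undefined) = (\<lambda>i. if i \<le> 2 then Comp D (\<sigma> i) (\<eta>X i) else undefined)"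
  proof (rule lam_eq)
    fix i :: nat assume "i \<le> 2" then have "i = 0 \<or> i = 1 \<or> i = 2" by arith
    then show "Comp D (\<eta>Y i) (\<beta> i) = Comp D (\<sigma> i) (\<eta>X i)"
      using c0 c1 c2 by (auto simp: \<eta>X_def \<eta>Y_def \<beta>_def)
  qed
  then show ?thesis unfolding eX eY fe sae by simp
qed

end

theorem lemma5p5:
  fixes D :: "('o, 'm) category"
    and so :: "'m diag \<Rightarrow> 'm diag" and sa :: "'m diag_arr \<Rightarrow> 'm diag_arr"
  assumes "category D"
    and "pseudo_functorial_factorization D so sa"
  shows "\<exists>to ta \<eta>. functorial_factorization D to ta \<and>
           nat_iso (fun_cat D 1) (fun_cat D 2) to ta so sa \<eta>"
proof -
  obtain \<theta> where F: "is_functor (fun_cat D 1) (fun_cat D 2) so sa"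
    and N: "nat_iso (fun_cat D 1) (fun_cat D 1) (restr_ob \<circ> so) (restr_ar \<circ> sa) (\<lambda>X. X) (\<lambda>f. f) \<theta>"
    using assms(2) unfolding pseudo_functorial_factorization_def by blast
  interpret pff D so sa \<theta> by unfold_locales (use assms(1) F N in auto)
  have ff: "functorial_factorization D (fto D so \<theta>) (fta D so sa \<theta>)"
    unfolding functorial_factorization_def
  proof (intro conjI ballI)
    show "is_functor (fun_cat D 1) (fun_cat D 2) (fto D so \<theta>) (fta D so sa \<theta>)" by (rule fto_functor)
  next
    fix X assume "X \<in> Ob (fun_cat D 1)"
    then show "restr_ob (fto D so \<theta> X) = X" using fto_facts(5) by simp
  next
    fix f assume "f \<in> Ar (fun_cat D 1)"
    then obtain X Y \<phi> where f: "f = (X, Y, \<phi>)" "diag_arr D 1 (X, Y, \<phi>)" by (cases f) auto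
    then show "restr_ar (fta D so sa \<theta> f) = f" using fta_facts(2) by simp
  qed
  have ni: "nat_iso (fun_cat D 1) (fun_cat D 2) (fto D so \<theta>) (fta D so sa \<theta>) so sa (feta D so \<theta>)"
    unfolding nat_iso_def
  proof (intro conjI ballI)
    show "is_functor (fun_cat D 1) (fun_cat D 2) (fto D so \<theta>) (fta D so sa \<theta>)" by (rule fto_functor)
    show "is_functor (fun_cat D 1) (fun_cat D 2) so sa" by (rule F)
  next
    fix X assume "X \<in> Ob (fun_cat D 1)"
    then show "feta D so \<theta> X \<in> hom (fun_cat D 2) (fto D so \<theta> X) (so X)" "is_iso (fun_cat D 2) (feta D so \<theta> X)"
      using feta_facts by simp_all
  next
    fix f assume "f \<in> Ar (fun_cat D 1)"
    then obtain X Y \<phi> where f: "f = (X, Y, \<phi>)" "diag_arr D 1 (X, Y, \<phi>)" by (cases f) auto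
    then show "Comp (fun_cat D 2) (feta D so \<theta> (Cod (fun_cat D 1) f)) (fta D so sa \<theta> f) =
      Comp (fun_cat D 2) (sa f) (feta D so \<theta> (Dom (fun_cat D 1) f))"
      using feta_nat by simp
  qed
  show ?thesis using ff ni by blast
qed

end
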